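(* Let $FO_{j,2}(\alpha,\lambda,n)$ be the number of partitions with perimeter $n$, largest part $\alpha$, exactly $\lambda$ parts, and exactly $j$ distinct even part sizes. Then, as formal power series, $$\sum_{\alpha,\lambda,n\geq 1}\sum_{j\geq 0} FO_{j,2}(\alpha,\lambda,n)\,x^\alpha y^\lambda z^j q^n=\frac{xyq\,(1-(y-xz)q)}{1-2yq+(y^2-x^2)q^2+(1-z)x^2yq^3}.$$
   Context: A partition is a finite nonincreasing sequence of positive integers (its parts); its size is not fixed. For a partition $\pi$ with largest part $\alpha(\pi)$ and number of parts $\lambda(\pi)$, its perimeter is $\alpha(\pi)+\lambda(\pi)-1$. (Note $FO_{j,2}(\alpha,\lambda,n)=0$ unless $n=\alpha+\lambda-1$.) *)

theory Defs
  imports "HOL-Computational_Algebra.Formal_Power_Series"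
begin

definition is_partition :: "nat list \<Rightarrow> bool" where
  "is_partition p \<longleftrightarrow> sorted_wrt (\<ge>) p \<and> (\<forall>a\<in>set p. 0 < a)"

text \<open>Largest part (maximum of the parts; 0 for the empty partition, which is excluded below)
  and number of parts.\<close>
definition largest_part :: "nat list \<Rightarrow> nat" where
  "largest_part p = Max (insert 0 (set p))"

definition num_parts :: "nat list \<Rightarrow> nat" where
  "num_parts p = length p"

definition perimeter :: "nat list \<Rightarrow> nat" where
  "perimeter p = largest_part p + num_parts p - 1"

definition num_even_sizes :: "nat list \<Rightarrow> nat" where
  "num_even_sizes p = card {a \<in> set p. even a}"

definition FO2 :: "nat \<Rightarrow> nat \<Rightarrow> nat \<Rightarrow> nat \<Rightarrow> nat" where
  "FO2 j a l n = card {p. is_partition p \<and> perimeter p = n \<and> largest_part p = a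
                          \<and> num_parts p = l \<and> num_even_sizes p = j}"

text \<open>Formal power series in four variables x, y, z, q over the rationals, realised as
  nested power series: the outermost variable is q, then z, then y, then x (innermost).\<close>
type_synonym fps4 = "rat fps fps fps fps"

definition qX :: fps4 where "qX = fps_X"
definition zX :: fps4 where "zX = fps_const fps_X"
definition yX :: fps4 where "yX = fps_const (fps_const fps_X)"
definition xX :: fps4 where "xX = fps_const (fps_const (fps_const fps_X))"

definition FO2_gf :: fps4 where
  "FO2_gf = Abs_fps (\<lambda>n. Abs_fps (\<lambda>j. Abs_fps (\<lambda>l. Abs_fps (\<lambda>a. 
      if 1 \<le> a \<and> 1 \<le> l \<and> 1 \<le> n then of_nat (FO2 j a l n) else 0))))"

end

theory Submission
  imports Defs
begin

unbundle fps_syntax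

lemma qX_nth: "(qX * H) $ n $ j $ l $ a = (if n = 0 then 0 else H $ (n-1) $ j $ l $ a)"
  by (cases n) (simp_all add: qX_def)
lemma zX_nth: "(zX * H) $ n $ j $ l $ a = (if j = 0 then 0 else H $ n $ (j-1) $ l $ a)"
  by (cases j) (simp_all add: zX_def)
lemma yX_nth: "(yX * H) $ n $ j $ l $ a = (if l = 0 then 0 else H $ n $ j $ (l-1) $ a)"
  by (cases l) (simp_all add: yX_def)
lemma xX_nth: "(xX * H) $ n $ j $ l $ a = (if a = 0 then 0 else H $ n $ j $ l $ (a-1))"
  by (cases a) (simp_all add: xX_def)
lemma one4_nth: "(1::fps4) $ n $ j $ l $ a = (if n = 0 \<and> j = 0 \<and> l = 0 \<and> a = 0 then 1 else 0)"
  by simp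

lemma inv1: "inverse (1::fps4) = 1"
  by (intro fps_inverse_one') simp



definition S :: "nat \<Rightarrow> nat \<Rightarrow> nat \<Rightarrow> nat list set" where
  "S j l a = {p. is_partition p \<and> largest_part p = a \<and> length p = l \<and> num_even_sizes p = j}"
definition cnt where "cnt j l a = card (S j l a)"

lemma le_largest: "x \<in> set p \<Longrightarrow> x \<le> largest_part p"
  unfolding largest_part_def by simp

lemma largest_in: "p \<noteq> [] \<Longrightarrow> largest_part p \<in> set p"
proof -
  assume "p \<noteq> []"
  then obtain x where x: "x \<in> set p" by (cases p) auto
  have m: "Max (insert 0 (set p)) \<in> insert 0 (set p)" by (intro Max_in) auto
  have "Max (insert 0 (set p)) \<ge> x" using x by simp
  show ?thesis
  proof (cases "Max (insert 0 (set p)) = 0")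
    case True
    then have "x = 0" using \<open>_ \<ge> x\<close> by simp
    then show ?thesis using x True unfolding largest_part_def by simp
  next
    case False then show ?thesis using m unfolding largest_part_def by auto
  qed
qed

lemma finite_S: "finite (S j l a)"
proof (rule finite_subset)
  show "S j l a \<subseteq> {xs. set xs \<subseteq> {0..a} \<and> length xs = l}"
    unfolding S_def using le_largest by fastforce
  show "finite {xs. set xs \<subseteq> {0..a} \<and> length xs = l}"
    by (rule finite_lists_length_eq) simp
qed

lemma S_len0: "S j 0 a = (if a = 0 \<and> j = 0 then {[]} else {})"
  by (auto simp: S_def is_partition_def largest_part_def num_even_sizes_def)

lemma part_largest0: "is_partition p \<Longrightarrow> largest_part p = 0 \<Longrightarrow> p = []"
  using le_largest[of _ p] by (cases p) (auto simp: is_partition_def)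

lemma S_a0: "S j l 0 = (if l = 0 \<and> j = 0 then {[]} else {})"
proof -
  have "largest_part [] = 0" "num_even_sizes [] = 0" "is_partition []"
    by (auto simp: is_partition_def largest_part_def num_even_sizes_def)
  then show ?thesis unfolding S_def using part_largest0 by (auto dest: part_largest0)
qed

lemma cnt_len0: "cnt j 0 a = (if a = 0 \<and> j = 0 then 1 else 0)"
  by (simp add: cnt_def S_len0)
lemma cnt_a0: "cnt j l 0 = (if l = 0 \<and> j = 0 then 1 else 0)"
  by (simp add: cnt_def S_a0)

lemma is_partition_Cons: "is_partition (a # t) \<longleftrightarrow> is_partition t \<and> (\<forall>x\<in>set t. x \<le> a) \<and> 0 < a"
  by (auto simp: is_partition_def)

lemma largest_Cons: "(\<forall>x\<in>set t. x \<le> a) \<Longrightarrow> largest_part (a # t) = a"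
  unfolding largest_part_def by (intro Max_eqI) auto

lemma evens_Cons_in: "a \<in> set t \<Longrightarrow> num_even_sizes (a # t) = num_even_sizes t"
  unfolding num_even_sizes_def by (simp add: insert_absorb)

definition ev :: "nat \<Rightarrow> nat" where "ev a = (if even a then 1 else 0)"

lemma evens_Cons_notin: "a \<notin> set t \<Longrightarrow>
   num_even_sizes (a # t) = num_even_sizes t + ev a"
proof -
  assume a: "a \<notin> set t"
  have "{x \<in> set (a # t). even x} = (if even a then insert a {x \<in> set t. even x} else {x \<in> set t. even x})"
    by auto
  then show ?thesis unfolding num_even_sizes_def using a by (simp add: ev_def)
qed

lemma part_hd: "is_partition p \<Longrightarrow> p \<noteq> [] \<Longrightarrow> hd p = largest_part p"
  by (cases p) (auto simp: is_partition_def largest_Cons)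


lemma S_rec:
  assumes "a \<ge> 1" "l \<ge> 1"
  shows "S j l a = Cons a ` (S j (l-1) a \<union>
     (\<Union>b\<in>{..<a}. {t. is_partition t \<and> largest_part t = b \<and> length t = l-1 \<and> num_even_sizes t + ev a = j}))"
  (is "?L = Cons a ` (?A \<union> ?B)")
proof
  show "?L \<subseteq> Cons a ` (?A \<union> ?B)"
  proof
    fix p assume p: "p \<in> ?L"
    then have pp: "is_partition p" "largest_part p = a" "length p = l" "num_even_sizes p = j"
      by (auto simp: S_def)
    then obtain t where t: "p = a # t" using assms part_hd[of p]
      by (cases p) auto
    have tp: "is_partition t" "\<forall>x\<in>set t. x \<le> a" using pp(1) t is_partition_Cons by auto
    have "t \<in> ?A \<union> ?B"
    proof (cases "largest_part t = a")
      case True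
      then have "t \<noteq> []" using assms by (auto simp: largest_part_def)
      then have "a \<in> set t" using largest_in True by metis
      then show ?thesis using True pp t tp evens_Cons_in[of a t] by (auto simp: S_def)
    next
      case False
      have "largest_part t \<le> a"
      proof (cases "t = []")
        case True then show ?thesis by (simp add: largest_part_def)
      next
        case False then show ?thesis using tp largest_in[of t] by blast
      qed
      then have lt: "largest_part t < a" using False by simp
      then have "a \<notin> set t" using le_largest[of a t] by auto
      then show ?thesis using lt pp t tp evens_Cons_notin[of a t] by auto
    qed
    then show "p \<in> Cons a ` (?A \<union> ?B)" using t by blast
  qed
next
  show "Cons a ` (?A \<union> ?B) \<subseteq> ?L"
  proof
    fix p assume "p \<in> Cons a ` (?A \<union> ?B)"
    then obtain t where t: "p = a # t" "t \<in> ?A \<union> ?B" by blast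
    show "p \<in> ?L"
    proof (cases "t \<in> ?A")
      case True
      then have tt: "is_partition t" "largest_part t = a" "length t = l - 1" "num_even_sizes t = j"
        by (auto simp: S_def)
      have "t \<noteq> []" using tt(2) assms by (auto simp: largest_part_def)
      then have "a \<in> set t" using largest_in tt(2) by metis
      moreover have "\<forall>x\<in>set t. x \<le> a" using le_largest tt(2) by metis
      ultimately show ?thesis using tt t assms evens_Cons_in[of a t]
        by (auto simp: S_def is_partition_Cons largest_Cons)
    next
      case False
      then obtain b where b: "b < a" "is_partition t" "largest_part t = b" "length t = l - 1"
         "num_even_sizes t + ev a = j" using t by auto
      have le: "\<forall>x\<in>set t. x \<le> a" using le_largest b by (metis less_imp_le order_trans)
      have "a \<notin> set t" using le_largest[of a t] b by auto
      then show ?thesis using b t assms le evens_Cons_notin[of a t]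
        by (auto simp: S_def is_partition_Cons largest_Cons)
    qed
  qed
qed

lemma cnt_rec:
  assumes "a \<ge> 1" "l \<ge> 1"
  shows "cnt j l a = cnt j (l-1) a + (if ev a \<le> j then (\<Sum>b<a. cnt (j - ev a) (l-1) b) else 0)"
proof -
  let ?B = "\<lambda>b. {t. is_partition t \<and> largest_part t = b \<and> length t = l-1 \<and> num_even_sizes t + ev a = j}"
  have Bb: "?B b = (if ev a \<le> j then S (j - ev a) (l-1) b else {})" for b
    by (auto simp: S_def)
  have finB: "finite (?B b)" for b by (subst Bb) (simp add: finite_S)
  have cB: "card (\<Union>b\<in>{..<a}. ?B b) = (\<Sum>b<a. card (?B b))"
    apply (rule card_UN_disjoint)
      apply simp
     apply (rule ballI, rule finB)
    by auto
  have disj: "S j (l-1) a \<inter> (\<Union>b\<in>{..<a}. ?B b) = {}" by (auto simp: S_def)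
  have "cnt j l a = card (S j (l-1) a \<union> (\<Union>b\<in>{..<a}. ?B b))"
    unfolding cnt_def S_rec[OF assms] by (intro card_image) auto
  also have "\<dots> = cnt j (l-1) a + card (\<Union>b\<in>{..<a}. ?B b)"
    unfolding cnt_def by (rule card_Un_disjoint[OF finite_S finite_UN_I[OF finite_lessThan finB] disj])
  also note cB
  also have "(\<Sum>b<a. card (?B b)) = (if ev a \<le> j then (\<Sum>b<a. cnt (j - ev a) (l-1) b) else 0)"
    by (subst Bb) (simp add: cnt_def)
  finally show ?thesis .
qed



definition P :: "nat \<Rightarrow> rat fps fps" where
  "P a = Abs_fps (\<lambda>l. Abs_fps (\<lambda>j. of_nat (cnt j l a)))"
definition zc :: "nat \<Rightarrow> rat fps" where
  "zc a = (if even a then fps_X else 1)"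
definition zp :: "nat \<Rightarrow> rat fps fps" where
  "zp a = fps_const (zc a)"
definition Ss :: "nat \<Rightarrow> rat fps fps" where
  "Ss a = (\<Sum>b<a. P b)"

lemma P_nth: "P a $ l $ j = of_nat (cnt j l a)" by (simp add: P_def)

lemma P0: "P 0 = 1"
  by (intro fps_ext) (simp add: P_def cnt_a0 fps_eq_iff)

lemma PR1:
  assumes "a \<ge> 1"
  shows "(1 - fps_X) * P a = fps_X * (zp a * Ss a)"
proof (rule fps_ext)
  fix l
  show "((1 - fps_X) * P a) $ l = (fps_X * (zp a * Ss a)) $ l"
  proof (cases l)
    case 0
    then show ?thesis using assms by (simp add: algebra_simps P_def cnt_len0 fps_eq_iff)
  next
    case (Suc m)
    have "((1 - fps_X) * P a) $ l = P a $ Suc m - P a $ m"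
      by (simp add: Suc algebra_simps)
    moreover have "(fps_X * (zp a * Ss a)) $ l = zc a * (\<Sum>b<a. P b $ m)"
      by (simp add: Suc Ss_def fps_sum_nth zp_def)
    moreover have "P a $ Suc m - P a $ m = zc a * (\<Sum>b<a. P b $ m)"
    proof (rule fps_ext)
      fix j
      have r: "cnt j (Suc m) a = cnt j m a + (if ev a \<le> j then (\<Sum>b<a. cnt (j - ev a) m b) else 0)"
        using cnt_rec[OF assms, of "Suc m" j] by simp
      show "(P a $ Suc m - P a $ m) $ j = (zc a * (\<Sum>b<a. P b $ m)) $ j"
      proof (cases "even a")
        case True
        then show ?thesis using r
          by (cases j) (simp_all add: zc_def ev_def P_nth fps_sum_nth of_nat_sum)
      next
        case False
        then show ?thesis using r
          by (simp add: zc_def ev_def P_nth fps_sum_nth of_nat_sum)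
      qed
    qed
    ultimately show ?thesis by simp
  qed
qed

lemma Ss_Suc: "Ss (Suc a) = Ss a + P a" by (simp add: Ss_def)

lemma SR: "a \<ge> 1 \<Longrightarrow> (1 - fps_X) * Ss (Suc a) = (1 - fps_X + fps_X * zp a) * Ss a"
  using PR1[of a] by (simp add: Ss_Suc algebra_simps)

lemma Ss1: "Ss (Suc 0) = 1" by (simp add: Ss_def P0)

lemma zp_pair: "(1 - fps_X + fps_X * zp (Suc a)) * (1 - fps_X + fps_X * zp a) = 1 - fps_X + fps_X * fps_const fps_X"
  by (simp add: zp_def zc_def algebra_simps)

lemma nz: "(1 - fps_X :: rat fps fps) \<noteq> 0"
proof
  assume "(1 - fps_X :: rat fps fps) = 0"
  then have "(1 - fps_X :: rat fps fps) $ 0 = 0" by simp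
  then show False by simp
qed

lemma Prec3:
  assumes "b \<ge> 1"
  shows "(1 - fps_X)^2 * P (Suc (Suc b)) = (1 - fps_X + fps_X * fps_const fps_X) * P b"
proof -
  let ?Y = "1 - fps_X :: rat fps fps"
  have zz: "zp (Suc (Suc b)) = zp b" by (simp add: zp_def zc_def)
  have A: "?Y * P (Suc (Suc b)) = fps_X * (zp b * Ss (Suc (Suc b)))"
    using PR1[of "Suc (Suc b)"] zz by simp
  have B: "?Y * Ss (Suc (Suc b)) = (?Y + fps_X * zp (Suc b)) * Ss (Suc b)"
    using SR[of "Suc b"] by simp
  have C: "?Y * Ss (Suc b) = (?Y + fps_X * zp b) * Ss b"
    using SR[OF assms] by simp
  have D: "?Y * P b = fps_X * (zp b * Ss b)" using PR1[OF assms] .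
  have "?Y * (?Y^2 * P (Suc (Suc b))) = ?Y * (?Y * (?Y * P (Suc (Suc b))))"
    by (simp add: power2_eq_square mult.assoc)
  also have "\<dots> = ?Y * (?Y * (fps_X * (zp b * Ss (Suc (Suc b)))))" by (simp only: A)
  also have "\<dots> = fps_X * zp b * (?Y * (?Y * Ss (Suc (Suc b))))" by (simp add: ac_simps)
  also have "\<dots> = fps_X * zp b * (?Y * ((?Y + fps_X * zp (Suc b)) * Ss (Suc b)))" by (simp only: B)
  also have "\<dots> = fps_X * zp b * (?Y + fps_X * zp (Suc b)) * (?Y * Ss (Suc b))" by (simp add: ac_simps)
  also have "\<dots> = fps_X * zp b * (?Y + fps_X * zp (Suc b)) * ((?Y + fps_X * zp b) * Ss b)" by (simp only: C)
  also have "\<dots> = ((?Y + fps_X * zp (Suc b)) * (?Y + fps_X * zp b)) * (fps_X * (zp b * Ss b))"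
    by (simp add: ac_simps)
  also have "\<dots> = (?Y + fps_X * fps_const fps_X) * (?Y * P b)"
    by (simp only: zp_pair D)
  also have "\<dots> = ?Y * ((?Y + fps_X * fps_const fps_X) * P b)" by (simp add: ac_simps)
  finally show ?thesis using nz by simp
qed

lemma Prec1: "(1 - fps_X)^2 * P 1 = fps_X * (1 - fps_X)"
proof -
  have A: "(1 - fps_X) * P 1 = fps_X" using PR1[of 1] by (simp add: Ss1 zp_def zc_def)
  have "(1 - fps_X)^2 * P 1 = (1 - fps_X) * ((1 - fps_X) * P 1)" by (simp add: power2_eq_square mult.assoc)
  also have "\<dots> = fps_X * (1 - fps_X)" by (subst A) (rule mult.commute)
  finally show ?thesis .
qed

lemma Prec2: "(1 - fps_X)^2 * P 2 = fps_X * fps_const fps_X"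
proof -
  have A: "(1 - fps_X) * P 2 = fps_X * (fps_const fps_X * Ss 2)"
    using PR1[of 2] by (simp add: zp_def zc_def)
  have B: "(1 - fps_X) * Ss 2 = 1"
    using SR[of 1] by (simp add: Ss1 zp_def zc_def numeral_2_eq_2)
  have "(1 - fps_X)^2 * P 2 = (1 - fps_X) * ((1 - fps_X) * P 2)" by (simp add: power2_eq_square mult.assoc)
  also have "\<dots> = fps_X * fps_const fps_X * ((1 - fps_X) * Ss 2)" by (simp only: A ac_simps)
  also have "\<dots> = fps_X * fps_const fps_X" by (simp only: B mult_1_right)
  finally show ?thesis .
qed



definition g :: "nat \<Rightarrow> nat \<Rightarrow> nat \<Rightarrow> rat" where "g j l a = of_nat (cnt j l a)"

lemma Pg: "P a $ l $ j = g j l a" by (simp add: P_nth g_def)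

lemma two_nth [simp]: "(2 * (F::'a::comm_ring_1 fps)) $ n = 2 * F $ n"
  by (simp only: mult_2 fps_add_nth)

lemma coefL: "((1 - fps_X)^2 * (Q :: rat fps fps)) $ l $ j =
   Q $ l $ j - 2 * (if l = 0 then 0 else Q $ (l-1) $ j) + (if l \<le> 1 then 0 else Q $ (l-2) $ j)"
proof -
  have "(1 - fps_X)^2 * Q = Q - fps_X * Q - fps_X * Q + fps_X * (fps_X * Q)"
    by (simp add: power2_eq_square algebra_simps)
  then show ?thesis
    by (cases l; cases "l - 1") (simp_all add: numeral_2_eq_2)
qed

lemma coefR: "((1 - fps_X + fps_X * fps_const fps_X) * (Q :: rat fps fps)) $ l $ j =
   Q $ l $ j - (if l = 0 then 0 else Q $ (l-1) $ j) + (if l = 0 \<or> j = 0 then 0 else Q $ (l-1) $ (j-1))"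
proof -
  have "(1 - fps_X + fps_X * fps_const fps_X) * Q = Q - fps_X * Q + fps_X * (fps_const fps_X * Q)"
    by (simp add: algebra_simps)
  then show ?thesis
    by (cases l; cases j) simp_all
qed

lemma rec3: "b \<ge> 1 \<Longrightarrow>
  g j l (Suc (Suc b)) - 2 * (if l = 0 then 0 else g j (l-1) (Suc (Suc b))) + (if l \<le> 1 then 0 else g j (l-2) (Suc (Suc b)))
  = g j l b - (if l = 0 then 0 else g j (l-1) b) + (if l = 0 \<or> j = 0 then 0 else g (j-1) (l-1) b)"
  using arg_cong[OF Prec3[of b], of "\<lambda>F. F $ l $ j"]
  by (simp only: coefL coefR Pg)

lemma rec1:
  "g j l 1 - 2 * (if l = 0 then 0 else g j (l-1) 1) + (if l \<le> 1 then 0 else g j (l-2) 1)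
  = (if j = 0 then (if l = 1 then 1 else if l = 2 then -1 else 0) else 0)"
  using arg_cong[OF Prec1, of "\<lambda>F. F $ l $ j"]
  by (simp only: coefL Pg) (cases l; cases "l-1"; auto simp: algebra_simps numeral_2_eq_2)

lemma rec2:
  "g j l 2 - 2 * (if l = 0 then 0 else g j (l-1) 2) + (if l \<le> 1 then 0 else g j (l-2) 2)
  = (if j = 1 \<and> l = 1 then 1 else 0)"
  using arg_cong[OF Prec2, of "\<lambda>F. F $ l $ j"]
  by (simp only: coefL Pg) (cases l; cases j; auto)

lemma g_len0: "g j 0 a = (if a = 0 \<and> j = 0 then 1 else 0)" by (simp add: g_def cnt_len0)
lemma g_a0: "g j l 0 = (if l = 0 \<and> j = 0 then 1 else 0)" by (simp add: g_def cnt_a0)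



lemma FO2_eq: "FO2 j a l n = (if n = a + l - 1 then cnt j l a else 0)"
proof -
  have e: "{p. is_partition p \<and> perimeter p = n \<and> largest_part p = a \<and> num_parts p = l
      \<and> num_even_sizes p = j} = (if n = a + l - 1 then S j l a else {})"
    by (auto simp: S_def perimeter_def num_parts_def)
  show ?thesis unfolding FO2_def e cnt_def by simp
qed

lemma G_nth: "FO2_gf $ n $ j $ l $ a = (if n + 1 = a + l then g j l a else 0)"
  by (cases "l = 0"; cases "a = 0") (auto simp: FO2_gf_def FO2_eq g_def cnt_len0 cnt_a0)

definition Dn :: fps4 where
  "Dn = 1 - 2 * yX * qX + (yX ^ 2 - xX ^ 2) * qX ^ 2 + (1 - zX) * xX ^ 2 * yX * qX ^ 3"

lemma GD_exp: "FO2_gf * Dn = FO2_gf - yX*(qX*FO2_gf) - yX*(qX*FO2_gf) + yX*(yX*(qX*(qX*FO2_gf)))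
   - xX*(xX*(qX*(qX*FO2_gf))) + xX*(xX*(yX*(qX*(qX*(qX*FO2_gf)))))
   - zX*(xX*(xX*(yX*(qX*(qX*(qX*FO2_gf))))))"
  unfolding Dn_def by (simp add: algebra_simps power2_eq_square power3_eq_cube mult_2)

lemma N_exp: "xX * yX * qX * (1 - (yX - xX * zX) * qX) =
   xX*(yX*(qX*1)) - xX*(yX*(yX*(qX*(qX*1)))) + xX*(xX*(zX*(yX*(qX*(qX*1)))))"
  by (simp add: algebra_simps)



abbreviation "G \<equiv> FO2_gf"

lemma T1: "G $ n $ j $ l $ a = (if n + 1 = a + l then g j l a else 0)" by (rule G_nth)
lemma T2: "(yX*(qX*G)) $ n $ j $ l $ a = (if 1 \<le> l \<and> 1 \<le> n \<and> n + 1 = a + l then g j (l-1) a else 0)"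
  by (auto simp add: qX_nth yX_nth G_nth numeral_2_eq_2 numeral_3_eq_3)
lemma T3: "(yX*(yX*(qX*(qX*G)))) $ n $ j $ l $ a = (if 2 \<le> l \<and> 2 \<le> n \<and> n + 1 = a + l then g j (l-2) a else 0)"
  by (auto simp add: qX_nth yX_nth G_nth numeral_2_eq_2 numeral_3_eq_3)
lemma T4: "(xX*(xX*(qX*(qX*G)))) $ n $ j $ l $ a = (if 2 \<le> a \<and> 2 \<le> n \<and> n + 1 = a + l then g j l (a-2) else 0)"
  by (auto simp add: qX_nth xX_nth G_nth numeral_2_eq_2 numeral_3_eq_3)
lemma T5: "(xX*(xX*(yX*(qX*(qX*(qX*G)))))) $ n $ j $ l $ a = (if 2 \<le> a \<and> 1 \<le> l \<and> 3 \<le> n \<and> n + 1 = a + l then g j (l-1) (a-2) else 0)"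
  by (auto simp add: qX_nth xX_nth yX_nth G_nth numeral_2_eq_2 numeral_3_eq_3)
lemma T6: "(zX*(xX*(xX*(yX*(qX*(qX*(qX*G))))))) $ n $ j $ l $ a = (if 1 \<le> j \<and> 2 \<le> a \<and> 1 \<le> l \<and> 3 \<le> n \<and> n + 1 = a + l then g (j-1) (l-1) (a-2) else 0)"
  by (auto simp add: qX_nth xX_nth yX_nth zX_nth G_nth numeral_2_eq_2 numeral_3_eq_3)
lemma qX1: "qX $ n $ j $ l $ a = (if n = 1 \<and> j = 0 \<and> l = 0 \<and> a = 0 then 1 else 0)"
  by (cases "n = 1") (simp_all add: qX_def)
lemma yX1: "yX $ n $ j $ l $ a = (if n = 0 \<and> j = 0 \<and> l = 1 \<and> a = 0 then 1 else 0)"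
  by (cases "l = 1") (simp_all add: yX_def)
lemma N1: "(xX*(yX*qX)) $ n $ j $ l $ a = (if n = 1 \<and> j = 0 \<and> l = 1 \<and> a = 1 then 1 else 0)"
  by (auto simp add: qX_nth xX_nth yX_nth qX1 yX1 numeral_2_eq_2)
lemma N2: "(xX*(yX*(yX*(qX*qX)))) $ n $ j $ l $ a = (if n = 2 \<and> j = 0 \<and> l = 2 \<and> a = 1 then 1 else 0)"
  by (auto simp add: qX_nth xX_nth yX_nth qX1 yX1 numeral_2_eq_2)
lemma N3: "(xX*(xX*(zX*(yX*(qX*qX))))) $ n $ j $ l $ a = (if n = 2 \<and> j = 1 \<and> l = 1 \<and> a = 2 then 1 else 0)"
  by (auto simp add: qX_nth xX_nth yX_nth zX_nth qX1 yX1 numeral_2_eq_2)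

lemma N_exp2: "xX * yX * qX * (1 - (yX - xX * zX) * qX) =
   xX*(yX*qX) - xX*(yX*(yX*(qX*qX))) + xX*(xX*(zX*(yX*(qX*qX))))"
  by (simp add: algebra_simps)

lemma coef_eq: "(G * Dn) $ n $ j $ l $ a = (xX * yX * qX * (1 - (yX - xX * zX) * qX)) $ n $ j $ l $ a"
proof -
  have e: "(G * Dn) $ n $ j $ l $ a - (xX * yX * qX * (1 - (yX - xX * zX) * qX)) $ n $ j $ l $ a
    = (if n + 1 = a + l then g j l a else 0)
      - (if 1 \<le> l \<and> 1 \<le> n \<and> n + 1 = a + l then g j (l-1) a else 0)
      - (if 1 \<le> l \<and> 1 \<le> n \<and> n + 1 = a + l then g j (l-1) a else 0)
      + (if 2 \<le> l \<and> 2 \<le> n \<and> n + 1 = a + l then g j (l-2) a else 0)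
      - (if 2 \<le> a \<and> 2 \<le> n \<and> n + 1 = a + l then g j l (a-2) else 0)
      + (if 2 \<le> a \<and> 1 \<le> l \<and> 3 \<le> n \<and> n + 1 = a + l then g j (l-1) (a-2) else 0)
      - (if 1 \<le> j \<and> 2 \<le> a \<and> 1 \<le> l \<and> 3 \<le> n \<and> n + 1 = a + l then g (j-1) (l-1) (a-2) else 0)
      - ((if n = 1 \<and> j = 0 \<and> l = 1 \<and> a = 1 then 1 else 0)
         - (if n = 2 \<and> j = 0 \<and> l = 2 \<and> a = 1 then 1 else 0)
         + (if n = 2 \<and> j = 1 \<and> l = 1 \<and> a = 2 then 1 else 0))"
    unfolding GD_exp N_exp2
    by (simp only: fps_add_nth fps_sub_nth T1 T2 T3 T4 T5 T6 N1 N2 N3)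
  have "(G * Dn) $ n $ j $ l $ a - (xX * yX * qX * (1 - (yX - xX * zX) * qX)) $ n $ j $ l $ a = 0"
  proof (cases "n + 1 = a + l")
    case False
    then show ?thesis unfolding e by auto
  next
    case True
    then have n: "n = a + l - 1" by simp
    consider "a = 0" | "a = 1" | "a = 2" | b where "a = Suc (Suc b)" "b \<ge> 1"
      by (metis One_nat_def Suc_le_eq le_SucE less_one not0_implies_Suc numeral_2_eq_2 nat_le_linear)
    then show ?thesis
    proof cases
      case 1
      then show ?thesis unfolding e using True by (auto simp: g_a0)
    next
      case 2
      then show ?thesis unfolding e using True rec1[of j l] by (cases l; cases "l - 1") auto
    next
      case 3
      then show ?thesis unfolding e using True rec2[of j l] by (cases l; cases "l - 1") (auto simp: g_a0 g_len0)
    next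
      case 4
      then show ?thesis unfolding e using True rec3[of b j l] by (cases l) (auto simp: g_len0)
    qed
  qed
  then show ?thesis by simp
qed


lemma GD: "G * Dn = xX * yX * qX * (1 - (yX - xX * zX) * qX)"
  by (intro fps_ext) (rule coef_eq)

lemma D0: "Dn $ 0 = 1"
  unfolding Dn_def qX_def by (simp add: power2_eq_square power3_eq_cube)

lemma inv3: "inverse (1 :: rat fps fps fps) = 1"
  by (intro fps_inverse_one') simp

lemma Dinv: "Dn * inverse Dn = 1"
proof -
  have "inverse Dn = fps_right_inverse Dn (inverse (Dn $ 0))" by (simp only: fps_inverse_def)
  then show ?thesis using fps_right_inverse[of Dn "inverse (Dn $ 0)"] D0 inv3 by simp
qed

theorem mainTheorem3:
  shows "FO2_gf =
    (xX * yX * qX * (1 - (yX - xX * zX) * qX)) *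
    inverse (1 - 2 * yX * qX + (yX ^ 2 - xX ^ 2) * qX ^ 2 + (1 - zX) * xX ^ 2 * yX * qX ^ 3)"
proof -
  have "FO2_gf = FO2_gf * (Dn * inverse Dn)" by (simp add: Dinv)
  also have "\<dots> = (FO2_gf * Dn) * inverse Dn" by (simp add: mult.assoc)
  finally show ?thesis unfolding GD by (simp add: Dn_def)
qed

end
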